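(* The set function $f:2^{[n-1]}\to\mathbb R$ is non-negative, non-decreasing and submodular.
   Context: Independent instance: each action $i\in[n]$ has a type drawn independently over types $j\in[m]$, type $j$ having probability $q_{ij}$, receiver value $\rho_{ij}$ and sender value $\xi_{ij}$. $\rho_E=\max_i\sum_jq_{ij}\rho_{ij}$. For $z\in[0,1]$, $g_i(z)=\max\{\sum_{j=1}^mx_{ij}\xi_{ij}:\sum_jx_{ij}\le z,\ \sum_jx_{ij}\rho_{ij}\ge\rho_E\sum_jx_{ij},\ x_{ij}\in[0,q_{ij}]\ \forall j\}$. For $S\subseteq[n-1]$, $f(S)=\max\{\sum_{i\in S\cup\{n\}}g_i(z_i):\sum_{i\in S\cup\{n\}}z_i\le1,\ z_i\ge0\ \forall i\in S\cup\{n\}\}$. *)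

theory Defs
  imports Complex_Main
begin

text \<open>Actions are indexed by {1..n}, types by {1..m}.
  q i j = probability that action i has type j, rho i j receiver value, xi i j sender value.\<close>

definition rhoE :: "nat \<Rightarrow> nat \<Rightarrow> (nat \<Rightarrow> nat \<Rightarrow> real) \<Rightarrow> (nat \<Rightarrow> nat \<Rightarrow> real) \<Rightarrow> real" where
  "rhoE n m q rho = Max ((\<lambda>i. \<Sum>j\<in>{1..m}. q i j * rho i j) ` {1..n})"

definition gfun :: "nat \<Rightarrow> nat \<Rightarrow> (nat \<Rightarrow> nat \<Rightarrow> real) \<Rightarrow> (nat \<Rightarrow> nat \<Rightarrow> real)
    \<Rightarrow> (nat \<Rightarrow> nat \<Rightarrow> real) \<Rightarrow> nat \<Rightarrow> real \<Rightarrow> real" where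
  "gfun n m q rho xi i z = Sup {(\<Sum>j\<in>{1..m}. x j * xi i j) | x :: nat \<Rightarrow> real.
      (\<Sum>j\<in>{1..m}. x j) \<le> z \<and>
      (\<Sum>j\<in>{1..m}. x j * rho i j) \<ge> rhoE n m q rho * (\<Sum>j\<in>{1..m}. x j) \<and>
      (\<forall>j\<in>{1..m}. 0 \<le> x j \<and> x j \<le> q i j)}"

definition ffun :: "nat \<Rightarrow> nat \<Rightarrow> (nat \<Rightarrow> nat \<Rightarrow> real) \<Rightarrow> (nat \<Rightarrow> nat \<Rightarrow> real)
    \<Rightarrow> (nat \<Rightarrow> nat \<Rightarrow> real) \<Rightarrow> nat set \<Rightarrow> real" where
  "ffun n m q rho xi S = Sup {(\<Sum>i\<in>S \<union> {n}. gfun n m q rho xi i (z i)) | z :: nat \<Rightarrow> real.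
      (\<Sum>i\<in>S \<union> {n}. z i) \<le> 1 \<and> (\<forall>i\<in>S \<union> {n}. 0 \<le> z i)}"

end

theory Submission imports Defs begin

definition Fv :: "(nat \<Rightarrow> real \<Rightarrow> real) \<Rightarrow> nat set \<Rightarrow> real" where
  "Fv G A = Sup {(\<Sum>i\<in>A. G i (z i)) | z :: nat \<Rightarrow> real. (\<Sum>i\<in>A. z i) \<le> 1 \<and> (\<forall>i\<in>A. 0 \<le> z i)}"

lemma Fv_upper:
  assumes "finite A" "\<And>i z. i \<in> A \<Longrightarrow> 0 \<le> z \<Longrightarrow> G i z \<le> Bd i"
    "(\<Sum>i\<in>A. z i) \<le> 1" "\<forall>i\<in>A. 0 \<le> z i"
  shows "(\<Sum>i\<in>A. G i (z i)) \<le> Fv G A"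
  unfolding Fv_def
proof (rule cSup_upper)
  show "bdd_above {(\<Sum>i\<in>A. G i (z i)) | z :: nat \<Rightarrow> real. (\<Sum>i\<in>A. z i) \<le> 1 \<and> (\<forall>i\<in>A. 0 \<le> z i)}"
    unfolding bdd_above_def
    by (rule exI[of _ "\<Sum>i\<in>A. Bd i"]) (auto intro!: sum_mono assms(2))
qed (use assms in auto)

lemma Fv_least:
  assumes "\<And>z. (\<Sum>i\<in>A. z i) \<le> 1 \<Longrightarrow> \<forall>i\<in>A. 0 \<le> z i \<Longrightarrow> (\<Sum>i\<in>A. G i (z i)) \<le> c"
  shows "Fv G A \<le> c"
  unfolding Fv_def
proof (rule cSup_least)
  show "{(\<Sum>i\<in>A. G i (z i)) | z :: nat \<Rightarrow> real. (\<Sum>i\<in>A. z i) \<le> 1 \<and> (\<forall>i\<in>A. 0 \<le> z i)} \<noteq> {}"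
    apply (simp add: ex_in_conv[symmetric]) apply (rule exI[of _ "\<lambda>_. 0"]) by simp
qed (use assms in auto)


lemma theta_exists:
  fixes US UT UC W :: real
  assumes "US \<ge> 0" "UT \<ge> 0" "UC \<ge> 0" "W \<ge> 0" "US + UT + UC \<le> 1" "W \<le> 1"
  shows "\<exists>th. 0 \<le> th \<and> th \<le> 1 \<and> US + th*UC + (1-th)*W \<le> 1 \<and> UT + th*W + (1-th)*UC \<le> 1"
proof (cases "W \<le> UC")
  case True
  then show ?thesis using assms by (intro exI[of _ 1]) auto
next
  case False
  show ?thesis
  proof (cases "US + W \<le> 1")
    case True
    then show ?thesis using assms by (intro exI[of _ 0]) auto
  next
    case F2: False
    define d where "d = W - UC"
    have d: "d > 0" using False d_def by auto
    define th where "th = (US + W - 1) / d"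
    have thd: "th * d = US + W - 1" using d th_def by simp
    have "th \<ge> 0" using F2 d th_def by simp
    moreover have "th \<le> 1"
    proof -
      have "th * d \<le> 1 * d" using thd assms d_def by simp
      then show ?thesis using d by simp
    qed
    moreover have "US + th*UC + (1-th)*W = US + W - th*d" by (simp add: d_def algebra_simps)
    moreover have "UT + th*W + (1-th)*UC = UT + UC + th*d" by (simp add: d_def algebra_simps)
    ultimately show ?thesis using thd assms by (intro exI[of _ th]) auto
  qed
qed

lemma sum_split3:
  assumes "finite A" "finite B"
  shows "sum (f::nat\<Rightarrow>real) (A \<union> B) = sum f (A - B) + sum f (B - A) + sum f (A \<inter> B)"
proof -
  have e: "A \<union> B = ((A - B) \<union> (A \<inter> B)) \<union> (B - A)" by auto
  have "sum f (A \<union> B) = sum f ((A - B) \<union> (A \<inter> B)) + sum f (B - A)"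
    unfolding e using assms by (intro sum.union_disjoint) auto
  also have "sum f ((A - B) \<union> (A \<inter> B)) = sum f (A - B) + sum f (A \<inter> B)"
    using assms by (intro sum.union_disjoint) auto
  finally show ?thesis by linarith
qed

lemma sum_split2:
  assumes "finite A"
  shows "sum (f::nat\<Rightarrow>real) A = sum f (A - B) + sum f (A \<inter> B)"
  using sum.Int_Diff[OF assms, of f B] by linarith


lemma Fv_submod:
  assumes fin: "finite A" "finite B"
    and bd: "\<And>i z. i \<in> A \<union> B \<Longrightarrow> 0 \<le> z \<Longrightarrow> G i z \<le> Bd i"
    and cc: "\<And>i x y t. i \<in> A \<union> B \<Longrightarrow> 0 \<le> x \<Longrightarrow> 0 \<le> y \<Longrightarrow> 0 \<le> t \<Longrightarrow> t \<le> 1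
               \<Longrightarrow> t * G i x + (1 - t) * G i y \<le> G i (t * x + (1 - t) * y)"
  shows "Fv G (A \<union> B) + Fv G (A \<inter> B) \<le> Fv G A + Fv G B"
proof -
  have key: "(\<Sum>i\<in>A \<union> B. G i (u i)) + (\<Sum>i\<in>A \<inter> B. G i (w i)) \<le> Fv G A + Fv G B"
    if u1: "(\<Sum>i\<in>A \<union> B. u i) \<le> 1" and u0: "\<forall>i\<in>A \<union> B. 0 \<le> u i"
      and w1: "(\<Sum>i\<in>A \<inter> B. w i) \<le> 1" and w0: "\<forall>i\<in>A \<inter> B. 0 \<le> w i" for u w
  proof -
    define US where "US = (\<Sum>i\<in>A - B. u i)"
    define UT where "UT = (\<Sum>i\<in>B - A. u i)"
    define UC where "UC = (\<Sum>i\<in>A \<inter> B. u i)"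
    define W where "W = (\<Sum>i\<in>A \<inter> B. w i)"
    have "US \<ge> 0" "UT \<ge> 0" "UC \<ge> 0" "W \<ge> 0"
      unfolding US_def UT_def UC_def W_def using u0 w0 by (auto intro!: sum_nonneg)
    moreover have "US + UT + UC \<le> 1" using u1 sum_split3[OF fin, of u]
      unfolding US_def UT_def UC_def by linarith
    moreover have "W \<le> 1" using w1 W_def by simp
    ultimately obtain th where th: "0 \<le> th" "th \<le> 1" "US + th*UC + (1-th)*W \<le> 1"
      "UT + th*W + (1-th)*UC \<le> 1"
      using theta_exists by blast
    define a where "a i = (if i \<in> B then th * u i + (1 - th) * w i else u i)" for i
    define b where "b i = (if i \<in> A then th * w i + (1 - th) * u i else u i)" for i
    have sa: "(\<Sum>i\<in>A. a i) = US + th*UC + (1-th)*W"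
    proof -
      have "(\<Sum>i\<in>A. a i) = (\<Sum>i\<in>A - B. a i) + (\<Sum>i\<in>A \<inter> B. a i)" using sum_split2[OF fin(1)] .
      also have "(\<Sum>i\<in>A - B. a i) = US" unfolding US_def a_def by (rule sum.cong) auto
      also have "(\<Sum>i\<in>A \<inter> B. a i) = (\<Sum>i\<in>A \<inter> B. th * u i + (1 - th) * w i)"
        unfolding a_def by (rule sum.cong) auto
      also have "\<dots> = th*UC + (1-th)*W" unfolding UC_def W_def
        by (simp add: sum.distrib sum_distrib_left)
      finally show ?thesis by simp
    qed
    have sb: "(\<Sum>i\<in>B. b i) = UT + th*W + (1-th)*UC"
    proof -
      have "(\<Sum>i\<in>B. b i) = (\<Sum>i\<in>B - A. b i) + (\<Sum>i\<in>B \<inter> A. b i)" using sum_split2[OF fin(2)] .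
      also have "(\<Sum>i\<in>B - A. b i) = UT" unfolding UT_def b_def by (rule sum.cong) auto
      also have "B \<inter> A = A \<inter> B" by auto
      also have "(\<Sum>i\<in>A \<inter> B. b i) = (\<Sum>i\<in>A \<inter> B. th * w i + (1 - th) * u i)"
        unfolding b_def by (rule sum.cong) auto
      also have "\<dots> = th*W + (1-th)*UC" unfolding UC_def W_def
        by (simp add: sum.distrib sum_distrib_left)
      finally show ?thesis by simp
    qed
    have a0: "\<forall>i\<in>A. 0 \<le> a i" using u0 w0 th unfolding a_def by auto
    have b0: "\<forall>i\<in>B. 0 \<le> b i" using u0 w0 th unfolding b_def by auto
    have FA: "(\<Sum>i\<in>A. G i (a i)) \<le> Fv G A"
      by (rule Fv_upper[where Bd=Bd]) (use fin bd a0 sa th in auto)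
    have FB: "(\<Sum>i\<in>B. G i (b i)) \<le> Fv G B"
      by (rule Fv_upper[where Bd=Bd]) (use fin bd b0 sb th in auto)
    have GA: "(\<Sum>i\<in>A. G i (a i)) = (\<Sum>i\<in>A - B. G i (u i)) + (\<Sum>i\<in>A \<inter> B. G i (a i))"
    proof -
      have "(\<Sum>i\<in>A. G i (a i)) = (\<Sum>i\<in>A - B. G i (a i)) + (\<Sum>i\<in>A \<inter> B. G i (a i))"
        using sum_split2[OF fin(1)] .
      also have "(\<Sum>i\<in>A - B. G i (a i)) = (\<Sum>i\<in>A - B. G i (u i))"
        unfolding a_def by (rule sum.cong) auto
      finally show ?thesis .
    qed
    have GB: "(\<Sum>i\<in>B. G i (b i)) = (\<Sum>i\<in>B - A. G i (u i)) + (\<Sum>i\<in>A \<inter> B. G i (b i))"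
    proof -
      have "(\<Sum>i\<in>B. G i (b i)) = (\<Sum>i\<in>B - A. G i (b i)) + (\<Sum>i\<in>B \<inter> A. G i (b i))"
        using sum_split2[OF fin(2)] .
      also have "(\<Sum>i\<in>B - A. G i (b i)) = (\<Sum>i\<in>B - A. G i (u i))"
        unfolding b_def by (rule sum.cong) auto
      also have "B \<inter> A = A \<inter> B" by auto
      finally show ?thesis .
    qed
    have GC: "(\<Sum>i\<in>A \<inter> B. G i (u i)) + (\<Sum>i\<in>A \<inter> B. G i (w i))
        \<le> (\<Sum>i\<in>A \<inter> B. G i (a i)) + (\<Sum>i\<in>A \<inter> B. G i (b i))"
    proof -
      have "(\<Sum>i\<in>A \<inter> B. G i (u i)) + (\<Sum>i\<in>A \<inter> B. G i (w i)) = (\<Sum>i\<in>A \<inter> B. G i (u i) + G i (w i))"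
        by (simp add: sum.distrib)
      also have "\<dots> \<le> (\<Sum>i\<in>A \<inter> B. G i (a i) + G i (b i))"
      proof (rule sum_mono)
        fix i assume i: "i \<in> A \<inter> B"
        have 1: "th * G i (u i) + (1 - th) * G i (w i) \<le> G i (a i)"
          unfolding a_def using i cc[of i "u i" "w i" th] u0 w0 th by auto
        have 2: "th * G i (w i) + (1 - th) * G i (u i) \<le> G i (b i)"
          unfolding b_def using i cc[of i "w i" "u i" th] u0 w0 th by auto
        have "G i (u i) + G i (w i) = (th * G i (u i) + (1 - th) * G i (w i)) + (th * G i (w i) + (1 - th) * G i (u i))"
          by (simp add: algebra_simps)
        then show "G i (u i) + G i (w i) \<le> G i (a i) + G i (b i)" using 1 2 by linarith
      qed
      also have "\<dots> = (\<Sum>i\<in>A \<inter> B. G i (a i)) + (\<Sum>i\<in>A \<inter> B. G i (b i))"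
        by (simp add: sum.distrib)
      finally show ?thesis .
    qed
    have "(\<Sum>i\<in>A \<union> B. G i (u i)) = (\<Sum>i\<in>A - B. G i (u i)) + (\<Sum>i\<in>B - A. G i (u i)) + (\<Sum>i\<in>A \<inter> B. G i (u i))"
      using sum_split3[OF fin] .
    then show ?thesis using GA GB GC FA FB by linarith
  qed
  have "(\<Sum>i\<in>A \<inter> B. G i (w i)) \<le> Fv G A + Fv G B - Fv G (A \<union> B)"
    if w1: "(\<Sum>i\<in>A \<inter> B. w i) \<le> 1" and w0: "\<forall>i\<in>A \<inter> B. 0 \<le> w i" for w
  proof -
    have "Fv G (A \<union> B) \<le> Fv G A + Fv G B - (\<Sum>i\<in>A \<inter> B. G i (w i))"
      by (rule Fv_least) (use key w1 w0 in force)
    then show ?thesis by linarith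
  qed
  then have "Fv G (A \<inter> B) \<le> Fv G A + Fv G B - Fv G (A \<union> B)"
    by (intro Fv_least) auto
  then show ?thesis by linarith
qed


lemma Fv_mono:
  assumes fin: "finite B" "A \<subseteq> B"
    and bd: "\<And>i z. i \<in> B \<Longrightarrow> 0 \<le> z \<Longrightarrow> G i z \<le> Bd i"
    and g0: "\<And>i. i \<in> B \<Longrightarrow> 0 \<le> G i 0"
  shows "Fv G A \<le> Fv G B"
proof (rule Fv_least)
  fix z :: "nat \<Rightarrow> real" assume z1: "(\<Sum>i\<in>A. z i) \<le> 1" and z0: "\<forall>i\<in>A. 0 \<le> z i"
  define z' where "z' i = (if i \<in> A then z i else 0)" for i
  have finA: "finite A" using fin finite_subset by blast
  have "(\<Sum>i\<in>B. z' i) = (\<Sum>i\<in>B - A. z' i) + (\<Sum>i\<in>B \<inter> A. z' i)" using sum_split2[OF fin(1), of z' A] by simp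
  also have "(\<Sum>i\<in>B - A. z' i) = 0" unfolding z'_def by simp
  also have "B \<inter> A = A" using fin by auto
  also have "(\<Sum>i\<in>A. z' i) = (\<Sum>i\<in>A. z i)" unfolding z'_def by simp
  finally have s1: "(\<Sum>i\<in>B. z' i) = (\<Sum>i\<in>A. z i)" by simp
  have "(\<Sum>i\<in>B. G i (z' i)) = (\<Sum>i\<in>B - A. G i (z' i)) + (\<Sum>i\<in>B \<inter> A. G i (z' i))"
    using sum_split2[OF fin(1), of "\<lambda>i. G i (z' i)" A] by simp
  also have "B \<inter> A = A" using fin by auto
  also have "(\<Sum>i\<in>A. G i (z' i)) = (\<Sum>i\<in>A. G i (z i))" unfolding z'_def by simp
  finally have s2: "(\<Sum>i\<in>B. G i (z' i)) = (\<Sum>i\<in>B - A. G i (z' i)) + (\<Sum>i\<in>A. G i (z i))" .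
  have "(\<Sum>i\<in>B - A. G i (z' i)) \<ge> 0" unfolding z'_def using g0 by (auto intro!: sum_nonneg)
  moreover have "(\<Sum>i\<in>B. G i (z' i)) \<le> Fv G B"
    by (rule Fv_upper[where Bd=Bd]) (use fin bd s1 z1 z0 in \<open>auto simp: z'_def\<close>)
  ultimately show "(\<Sum>i\<in>A. G i (z i)) \<le> Fv G B" using s2 by linarith
qed

lemma Fv_nonneg:
  assumes fin: "finite A"
    and bd: "\<And>i z. i \<in> A \<Longrightarrow> 0 \<le> z \<Longrightarrow> G i z \<le> Bd i"
    and g0: "\<And>i. i \<in> A \<Longrightarrow> 0 \<le> G i 0"
  shows "0 \<le> Fv G A"
proof -
  have "(\<Sum>i\<in>A. G i ((\<lambda>_. 0) i)) \<le> Fv G A"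
    by (rule Fv_upper[where Bd=Bd]) (use fin bd in auto)
  moreover have "(\<Sum>i\<in>A. G i ((\<lambda>_. 0) i)) \<ge> 0" using g0 by (auto intro!: sum_nonneg)
  ultimately show ?thesis by linarith
qed

lemma sup_comb:
  fixes X Y :: "real set"
  assumes "X \<noteq> {}" "Y \<noteq> {}" "bdd_above X" "bdd_above Y" "0 < s" "0 < r"
    and h: "\<And>a b. a \<in> X \<Longrightarrow> b \<in> Y \<Longrightarrow> s * a + r * b \<le> c"
  shows "s * Sup X + r * Sup Y \<le> c"
proof -
  have "r * b \<le> c - s * Sup X" if b: "b \<in> Y" for b
  proof -
    have "Sup X \<le> (c - r * b) / s"
    proof (rule cSup_least[OF assms(1)])
      fix a assume "a \<in> X"
      then have "s * a \<le> c - r * b" using h b by force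
      then show "a \<le> (c - r * b) / s" using assms(5) by (simp add: field_simps)
    qed
    then have "s * Sup X \<le> c - r * b" using assms(5) by (simp add: field_simps)
    then show ?thesis by linarith
  qed
  then have "Sup Y \<le> (c - s * Sup X) / r"
    using assms(6) by (intro cSup_least[OF assms(2)]) (simp add: field_simps)
  then show ?thesis using assms(6) by (simp add: field_simps)
qed


definition gset where
  "gset n m q rho xi i z = {(\<Sum>j\<in>{1..m}. x j * xi i j) | x :: nat \<Rightarrow> real.
      (\<Sum>j\<in>{1..m}. x j) \<le> z \<and>
      (\<Sum>j\<in>{1..m}. x j * rho i j) \<ge> rhoE n m q rho * (\<Sum>j\<in>{1..m}. x j) \<and>
      (\<forall>j\<in>{1..m}. 0 \<le> x j \<and> x j \<le> q i j)}"

lemma gfun_gset: "gfun n m q rho xi i z = Sup (gset n m q rho xi i z)"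
  unfolding gfun_def gset_def by simp

lemma gset_bdd: "bdd_above (gset n m q rho xi i z)"
  unfolding bdd_above_def gset_def
proof (rule exI[of _ "\<Sum>j\<in>{1..m}. q i j * \<bar>xi i j\<bar>"], safe)
  fix x :: "nat \<Rightarrow> real" assume h: "\<forall>j\<in>{1..m}. 0 \<le> x j \<and> x j \<le> q i j"
  show "(\<Sum>j\<in>{1..m}. x j * xi i j) \<le> (\<Sum>j\<in>{1..m}. q i j * \<bar>xi i j\<bar>)"
  proof (rule sum_mono)
    fix j assume j: "j \<in> {1..m}"
    have "x j * xi i j \<le> x j * \<bar>xi i j\<bar>" using h j by (intro mult_left_mono) auto
    also have "\<dots> \<le> q i j * \<bar>xi i j\<bar>" using h j by (intro mult_right_mono) auto
    finally show "x j * xi i j \<le> q i j * \<bar>xi i j\<bar>" .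
  qed
qed

lemma gset_ne: "\<forall>j\<in>{1..m}. 0 \<le> q i j \<Longrightarrow> 0 \<le> z \<Longrightarrow> gset n m q rho xi i z \<noteq> {}"
  unfolding gset_def by (auto intro!: exI[of _ "\<lambda>_. 0"])

lemma g_bound: "\<forall>j\<in>{1..m}. 0 \<le> q i j \<Longrightarrow> 0 \<le> z \<Longrightarrow> gfun n m q rho xi i z \<le> (\<Sum>j\<in>{1..m}. q i j * \<bar>xi i j\<bar>)"
  unfolding gfun_gset
proof (rule cSup_least[OF gset_ne], assumption+)
  fix v assume "v \<in> gset n m q rho xi i z"
  then obtain x :: "nat \<Rightarrow> real" where v: "v = (\<Sum>j\<in>{1..m}. x j * xi i j)"
    and h: "\<forall>j\<in>{1..m}. 0 \<le> x j \<and> x j \<le> q i j" unfolding gset_def by auto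
  show "v \<le> (\<Sum>j\<in>{1..m}. q i j * \<bar>xi i j\<bar>)" unfolding v
  proof (rule sum_mono)
    fix j assume j: "j \<in> {1..m}"
    have "x j * xi i j \<le> x j * \<bar>xi i j\<bar>" using h j by (intro mult_left_mono) auto
    also have "\<dots> \<le> q i j * \<bar>xi i j\<bar>" using h j by (intro mult_right_mono) auto
    finally show "x j * xi i j \<le> q i j * \<bar>xi i j\<bar>" .
  qed
qed

lemma g0: assumes "\<forall>j\<in>{1..m}. 0 \<le> q i j" shows "0 \<le> gfun n m q rho xi i 0"
  unfolding gfun_gset
  by (rule cSup_upper[OF _ gset_bdd]) (use assms in \<open>auto simp: gset_def intro!: exI[of _ "\<lambda>_. 0"]\<close>)

lemma g_concave:
  assumes "0 \<le> z1" "0 \<le> z2" "0 \<le> t" "t \<le> 1" and qn: "\<forall>j\<in>{1..m}. 0 \<le> q i j"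
  shows "t * gfun n m q rho xi i z1 + (1 - t) * gfun n m q rho xi i z2
     \<le> gfun n m q rho xi i (t * z1 + (1 - t) * z2)"
proof -
  consider "t = 0" | "t = 1" | "0 < t \<and> t < 1" using assms by linarith
  then show ?thesis
  proof cases
    case 1 then show ?thesis by simp
  next
    case 2 then show ?thesis by simp
  next
    case 3
    let ?R = "rhoE n m q rho"
    show ?thesis unfolding gfun_gset
    proof (rule sup_comb[OF gset_ne gset_ne gset_bdd gset_bdd])
      show "0 \<le> z1" "0 \<le> z2" "0 < t" "0 < 1 - t" "\<forall>j\<in>{1..m}. 0 \<le> q i j" "\<forall>j\<in>{1..m}. 0 \<le> q i j" using assms 3 by auto
      fix a b assume a: "a \<in> gset n m q rho xi i z1" and b: "b \<in> gset n m q rho xi i z2"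
      obtain x1 :: "nat \<Rightarrow> real" where av: "a = (\<Sum>j\<in>{1..m}. x1 j * xi i j)"
        and a1: "(\<Sum>j\<in>{1..m}. x1 j) \<le> z1"
        and a2: "(\<Sum>j\<in>{1..m}. x1 j * rho i j) \<ge> ?R * (\<Sum>j\<in>{1..m}. x1 j)"
        and a3: "\<forall>j\<in>{1..m}. 0 \<le> x1 j \<and> x1 j \<le> q i j"
        using a unfolding gset_def by auto
      obtain x2 :: "nat \<Rightarrow> real" where bv: "b = (\<Sum>j\<in>{1..m}. x2 j * xi i j)"
        and b1: "(\<Sum>j\<in>{1..m}. x2 j) \<le> z2"
        and b2: "(\<Sum>j\<in>{1..m}. x2 j * rho i j) \<ge> ?R * (\<Sum>j\<in>{1..m}. x2 j)"
        and b3: "\<forall>j\<in>{1..m}. 0 \<le> x2 j \<and> x2 j \<le> q i j"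
        using b unfolding gset_def by auto
      define x where "x j = t * x1 j + (1 - t) * x2 j" for j
      have sx: "(\<Sum>j\<in>{1..m}. x j) = t * (\<Sum>j\<in>{1..m}. x1 j) + (1 - t) * (\<Sum>j\<in>{1..m}. x2 j)"
        unfolding x_def by (simp add: sum.distrib sum_distrib_left)
      have sr: "(\<Sum>j\<in>{1..m}. x j * rho i j) = t * (\<Sum>j\<in>{1..m}. x1 j * rho i j) + (1 - t) * (\<Sum>j\<in>{1..m}. x2 j * rho i j)"
        unfolding x_def by (simp add: distrib_right sum.distrib sum_distrib_left mult.assoc)
      have sv: "(\<Sum>j\<in>{1..m}. x j * xi i j) = t * a + (1 - t) * b"
        unfolding x_def av bv by (simp add: distrib_right sum.distrib sum_distrib_left mult.assoc)
      have t0: "0 \<le> t" "0 \<le> 1 - t" using 3 by auto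
      have c1: "(\<Sum>j\<in>{1..m}. x j) \<le> t * z1 + (1 - t) * z2"
        unfolding sx using mult_left_mono[OF a1 t0(1)] mult_left_mono[OF b1 t0(2)] by linarith
      have c2: "(\<Sum>j\<in>{1..m}. x j * rho i j) \<ge> ?R * (\<Sum>j\<in>{1..m}. x j)"
        unfolding sr sx using mult_left_mono[OF a2 t0(1)] mult_left_mono[OF b2 t0(2)]
        by (simp add: algebra_simps)
      have c3: "\<forall>j\<in>{1..m}. 0 \<le> x j \<and> x j \<le> q i j"
      proof
        fix j assume j: "j \<in> {1..m}"
        have "0 \<le> t * x1 j" "0 \<le> (1 - t) * x2 j" using a3 b3 j t0 by auto
        moreover have "t * x1 j \<le> t * q i j" "(1 - t) * x2 j \<le> (1 - t) * q i j"
          using a3 b3 j t0 by (auto intro: mult_left_mono)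
        ultimately show "0 \<le> x j \<and> x j \<le> q i j" unfolding x_def by (simp add: algebra_simps)
      qed
      have "t * a + (1 - t) * b \<in> gset n m q rho xi i (t * z1 + (1 - t) * z2)"
        unfolding gset_def using c1 c2 c3 sv by (auto intro!: exI[of _ x])
      then show "t * a + (1 - t) * b \<le> Sup (gset n m q rho xi i (t * z1 + (1 - t) * z2))"
        by (rule cSup_upper[OF _ gset_bdd])
    qed
  qed
qed


theorem lemma4p3:
  fixes n m :: nat and q rho xi :: "nat \<Rightarrow> nat \<Rightarrow> real"
  assumes "n \<ge> 1"
    and q_nonneg: "\<And>i j. i \<in> {1..n} \<Longrightarrow> j \<in> {1..m} \<Longrightarrow> q i j \<ge> 0"
    and q_sum: "\<And>i. i \<in> {1..n} \<Longrightarrow> (\<Sum>j\<in>{1..m}. q i j) = 1"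
  shows "(\<forall>S. S \<subseteq> {1..n-1} \<longrightarrow> ffun n m q rho xi S \<ge> 0)
    \<and> (\<forall>S T. S \<subseteq> T \<and> T \<subseteq> {1..n-1} \<longrightarrow> ffun n m q rho xi S \<le> ffun n m q rho xi T)
    \<and> (\<forall>S T. S \<subseteq> {1..n-1} \<and> T \<subseteq> {1..n-1} \<longrightarrow>
          ffun n m q rho xi (S \<union> T) + ffun n m q rho xi (S \<inter> T)
            \<le> ffun n m q rho xi S + ffun n m q rho xi T)"
proof -
  define G where "G = gfun n m q rho xi"
  define Bd where "Bd i = (\<Sum>j\<in>{1..m}. q i j * \<bar>xi i j\<bar>)" for i
  have F: "ffun n m q rho xi S = Fv G (S \<union> {n})" for S
    unfolding ffun_def Fv_def G_def by simp
  have sub: "S \<union> {n} \<subseteq> {1..n}" if "S \<subseteq> {1..n-1}" for S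
  proof
    fix x assume "x \<in> S \<union> {n}"
    then show "x \<in> {1..n}" using that assms(1) by (auto dest!: subsetD[OF that])
  qed
  have fin: "finite (S \<union> {n})" if "S \<subseteq> {1..n-1}" for S
    using that finite_subset by (metis finite_Un finite_atLeastAtMost finite.emptyI finite_insert)
  have qn: "\<forall>j\<in>{1..m}. 0 \<le> q i j" if "i \<in> {1..n}" for i using q_nonneg that by auto
  have bd: "G i z \<le> Bd i" if "i \<in> {1..n}" "0 \<le> z" for i z
    unfolding G_def Bd_def using g_bound qn that by blast
  have gz: "0 \<le> G i 0" if "i \<in> {1..n}" for i unfolding G_def using g0 qn that by blast
  have cc: "t * G i x + (1 - t) * G i y \<le> G i (t * x + (1 - t) * y)"
    if "i \<in> {1..n}" "0 \<le> x" "0 \<le> y" "0 \<le> t" "t \<le> 1" for i x y t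
    unfolding G_def using g_concave qn that by blast
  show ?thesis
  proof (intro conjI allI impI)
    fix S assume S: "S \<subseteq> {1..n-1}"
    show "0 \<le> ffun n m q rho xi S" unfolding F
      by (rule Fv_nonneg[where Bd=Bd]) (use fin[OF S] sub[OF S] bd gz in auto)
  next
    fix S T assume h: "S \<subseteq> T \<and> T \<subseteq> {1..n-1}"
    then have T: "T \<subseteq> {1..n-1}" by simp
    show "ffun n m q rho xi S \<le> ffun n m q rho xi T" unfolding F
      by (rule Fv_mono[where Bd=Bd]) (use fin[OF T] sub[OF T] bd gz h in auto)
  next
    fix S T assume h: "S \<subseteq> {1..n-1} \<and> T \<subseteq> {1..n-1}"
    then have S: "S \<subseteq> {1..n-1}" and T: "T \<subseteq> {1..n-1}" by auto
    have e1: "(S \<union> T) \<union> {n} = (S \<union> {n}) \<union> (T \<union> {n})" by auto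
    have e2: "(S \<inter> T) \<union> {n} = (S \<union> {n}) \<inter> (T \<union> {n})" by auto
    have U: "(S \<union> {n}) \<union> (T \<union> {n}) \<subseteq> {1..n}" using sub[OF S] sub[OF T] by auto
    show "ffun n m q rho xi (S \<union> T) + ffun n m q rho xi (S \<inter> T)
            \<le> ffun n m q rho xi S + ffun n m q rho xi T"
      unfolding F e1 e2
      by (rule Fv_submod[where Bd=Bd, OF fin[OF S] fin[OF T]]) (use U bd cc in auto)
  qed
qed

end
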